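(* Let $f:\mathbb{R}^d\to\mathbb{R}$ be $\beta$-smooth with minimum value $f^\star$, and run AdaSGD (as defined in the context) with parameters $\eta,\gamma>0$ using a stochastic gradient oracle with bounded affine noise with parameters $\sigma_0,\sigma_1\ge0$. Then for all $t\ge1$, $$\sum_{s=1}^t|\tilde\eta_s-\eta_s|\,(\nabla f(w_s)\cdot g_s)\le\frac{\bar\Delta_t}4+\frac12\sum_{s=1}^t\tilde\eta_s\|\nabla f(w_s)\|^2+2\eta\sigma_0\sum_{s=1}^t\frac{\|g_s\|^2}{G_s^2}+8\eta^2\beta\sigma_1^2\Big(\sum_{s=1}^t\frac{\|g_s\|^2}{G_s^2}\Big)^2.$$
   Context: $\|\cdot\|$ is the Euclidean norm. $\beta$-smooth: $\|\nabla f(x)-\nabla f(y)\|\le\beta\|x-y\|$. Oracle: queried at $w$, returns random $g(w)$ with $\mathbb{E}[g(w)\mid w]=\nabla f(w)$ and, with probability one, $\|g(w)-\nabla f(w)\|^2\le\sigma_0^2+\sigma_1^2\|\nabla f(w)\|^2$. AdaSGD: arbitrary $w_1$; for each $t$, $g_t=g(w_t)$, $G_t=\sqrt{\gamma^2+\sum_{s=1}^t\|g_s\|^2}$ (so $G_0=\gamma$), $\eta_t=\eta/G_t$, $w_{t+1}=w_t-\eta_tg_t$. Decorrelated step sizes: $\tilde\eta_t=\eta/\sqrt{G_{t-1}^2+(1+\sigma_1^2)\|\nabla f(w_t)\|^2+\sigma_0^2}$. $\bar\Delta_t=\max_{s\le t}f(w_s)-f^\star$. *)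

theory Defs
  imports "HOL-Analysis.Analysis"
begin

text \<open>AdaSGD quantities. Iterations are indexed from 1; g t is the stochastic
gradient returned at iterate w t.\<close>

definition adaG :: "real \<Rightarrow> (nat \<Rightarrow> 'a::euclidean_space) \<Rightarrow> nat \<Rightarrow> real" where
  "adaG \<gamma> g t = sqrt (\<gamma>\<^sup>2 + (\<Sum>s=1..t. (norm (g s))\<^sup>2))"

definition ada_eta :: "real \<Rightarrow> real \<Rightarrow> (nat \<Rightarrow> 'a::euclidean_space) \<Rightarrow> nat \<Rightarrow> real" where
  "ada_eta \<eta> \<gamma> g t = \<eta> / adaG \<gamma> g t"

definition eta_tilde :: "real \<Rightarrow> real \<Rightarrow> real \<Rightarrow> real \<Rightarrow> ('a::euclidean_space \<Rightarrow> 'a)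
    \<Rightarrow> (nat \<Rightarrow> 'a) \<Rightarrow> (nat \<Rightarrow> 'a) \<Rightarrow> nat \<Rightarrow> real" where
  "eta_tilde \<eta> \<gamma> \<sigma>\<^sub>0 \<sigma>\<^sub>1 gradf w g t =
     \<eta> / sqrt ((adaG \<gamma> g (t - 1))\<^sup>2 + (1 + \<sigma>\<^sub>1\<^sup>2) * (norm (gradf (w t)))\<^sup>2 + \<sigma>\<^sub>0\<^sup>2)"

definition Delta_bar :: "('a \<Rightarrow> real) \<Rightarrow> real \<Rightarrow> (nat \<Rightarrow> 'a) \<Rightarrow> nat \<Rightarrow> real" where
  "Delta_bar f fstar w t = Max ((\<lambda>s. f (w s)) ` {1..t}) - fstar"

end

theory Submission
  imports Defs
begin

lemma key:
  fixes P n N \<sigma> \<eta> ip :: real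
  assumes P: "P > 0" and n: "n \<ge> 0" and N: "N \<ge> 0" and eta: "\<eta> > 0" and sg: "\<sigma> \<ge> 0"
    and nN: "(n - N)\<^sup>2 \<le> \<sigma>\<^sup>2" and ip: "ip \<le> N * n"
  shows "\<bar>\<eta> / sqrt (P + N\<^sup>2 + \<sigma>\<^sup>2) - \<eta> / sqrt (P + n\<^sup>2)\<bar> * ip
     \<le> 1/2 * (\<eta> / sqrt (P + N\<^sup>2 + \<sigma>\<^sup>2)) * N\<^sup>2 + \<eta> * \<sigma> * n\<^sup>2 / (P + n\<^sup>2)"
proof -
  define ra where "ra = sqrt (P + n\<^sup>2)"
  define rb where "rb = sqrt (P + N\<^sup>2 + \<sigma>\<^sup>2)"
  have ra0: "ra > 0" using P n unfolding ra_def by (simp add: add_pos_nonneg)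
  have rb0: "rb > 0" using P unfolding rb_def by (simp add: add_pos_nonneg)
  have ra2: "ra\<^sup>2 = P + n\<^sup>2" unfolding ra_def using P by (simp add: add_nonneg_nonneg)
  have rb2: "rb\<^sup>2 = P + N\<^sup>2 + \<sigma>\<^sup>2" unfolding rb_def using P by (simp add: add_nonneg_nonneg)
  have sgrb: "\<sigma> \<le> rb"
  proof -
    have "\<sigma>\<^sup>2 \<le> rb\<^sup>2" using rb2 P by simp
    thus ?thesis using power2_le_imp_le[of \<sigma> rb] rb0 by simp
  qed
  have "(ra*rb)\<^sup>2 \<ge> (P + n*N)\<^sup>2"
  proof -
    have "(ra*rb)\<^sup>2 = (P + n\<^sup>2) * (P + N\<^sup>2 + \<sigma>\<^sup>2)" by (simp add: power_mult_distrib ra2 rb2)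
    also have "\<dots> \<ge> (P + n\<^sup>2) * (P + N\<^sup>2)" using P by (intro mult_left_mono) auto
    finally have h: "(ra*rb)\<^sup>2 \<ge> (P + n\<^sup>2) * (P + N\<^sup>2)" .
    have "(P + n\<^sup>2) * (P + N\<^sup>2) - (P + n*N)\<^sup>2 = P * (n - N)\<^sup>2 + 0"
      by (simp add: power2_eq_square algebra_simps)
    moreover have "P * (n - N)\<^sup>2 \<ge> 0" using P by simp
    ultimately show ?thesis using h by linarith
  qed
  hence rr: "ra*rb \<ge> P + n*N" using power2_le_imp_le[of "P + n*N" "ra*rb"] ra0 rb0 by simp
  define x where "x = \<bar>ra - rb\<bar>"
  have x0: "x \<ge> 0" unfolding x_def by simp
  have x2: "x\<^sup>2 \<le> 2 * \<sigma>\<^sup>2"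
  proof -
    have "x\<^sup>2 = ra\<^sup>2 + rb\<^sup>2 - 2*(ra*rb)" unfolding x_def by (simp add: power2_eq_square algebra_simps)
    also have "\<dots> \<le> (n - N)\<^sup>2 + \<sigma>\<^sup>2" using rr ra2 rb2 by (simp add: power2_eq_square algebra_simps)
    finally show ?thesis using nN by simp
  qed
  have diff: "\<bar>\<eta>/rb - \<eta>/ra\<bar> = (\<eta>/rb) * (x / ra)"
  proof -
    have "\<eta>/rb - \<eta>/ra = (\<eta>/rb) * ((ra - rb)/ra)" using ra0 rb0 by (simp add: field_simps)
    hence "\<bar>\<eta>/rb - \<eta>/ra\<bar> = \<bar>\<eta>/rb\<bar> * (\<bar>ra - rb\<bar>/\<bar>ra\<bar>)" by (simp add: abs_mult)
    thus ?thesis using ra0 rb0 eta unfolding x_def by simp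
  qed
  have amgm: "N * (x*n/ra) \<le> 1/2 * N\<^sup>2 + 1/2 * (x*n/ra)\<^sup>2"
  proof -
    have "0 \<le> (N - x*n/ra)\<^sup>2" by simp
    thus ?thesis unfolding power2_diff by linarith
  qed
  have "(x*n/ra)\<^sup>2 = x\<^sup>2 * n\<^sup>2 / ra\<^sup>2" by (simp add: power_mult_distrib power_divide)
  also have "\<dots> \<le> 2 * \<sigma>\<^sup>2 * n\<^sup>2 / ra\<^sup>2" using x2 by (intro divide_right_mono mult_right_mono) auto
  also have "\<dots> = 2 * (\<sigma>\<^sup>2 * n\<^sup>2 / ra\<^sup>2)" by simp
  finally have q: "1/2 * (x*n/ra)\<^sup>2 \<le> \<sigma>\<^sup>2 * n\<^sup>2 / ra\<^sup>2" by linarith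
  have "\<bar>\<eta>/rb - \<eta>/ra\<bar> * ip \<le> \<bar>\<eta>/rb - \<eta>/ra\<bar> * (N * n)" using ip by (intro mult_left_mono) auto
  also have "\<dots> = (\<eta>/rb) * (N * (x*n/ra))" using diff by simp
  also have "\<dots> \<le> (\<eta>/rb) * (1/2 * N\<^sup>2 + \<sigma>\<^sup>2 * n\<^sup>2 / ra\<^sup>2)"
  proof -
    have "N * (x*n/ra) \<le> 1/2 * N\<^sup>2 + \<sigma>\<^sup>2 * n\<^sup>2 / ra\<^sup>2" using amgm q by linarith
    thus ?thesis using eta rb0 by (intro mult_left_mono) auto
  qed
  also have "\<dots> = 1/2 * (\<eta>/rb) * N\<^sup>2 + \<eta> * \<sigma> * n\<^sup>2 / ra\<^sup>2 * (\<sigma> / rb)"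
    using rb0 by (simp add: field_simps power2_eq_square)
  also have "\<dots> \<le> 1/2 * (\<eta>/rb) * N\<^sup>2 + \<eta> * \<sigma> * n\<^sup>2 / ra\<^sup>2"
  proof -
    have "\<sigma>/rb \<le> 1" using sgrb rb0 by simp
    moreover have "\<eta> * \<sigma> * n\<^sup>2 / ra\<^sup>2 \<ge> 0" using eta sg by simp
    ultimately have "\<eta> * \<sigma> * n\<^sup>2 / ra\<^sup>2 * (\<sigma> / rb) \<le> \<eta> * \<sigma> * n\<^sup>2 / ra\<^sup>2"
      by (rule mult_left_le)
    thus ?thesis by linarith
  qed
  finally show ?thesis unfolding ra_def[symmetric] rb_def[symmetric] using ra2 by simp
qed

lemma descent:
  fixes f :: "'a::euclidean_space \<Rightarrow> real" and gradf :: "'a \<Rightarrow> 'a"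
  assumes grad: "\<And>x. (f has_derivative (\<lambda>h. gradf x \<bullet> h)) (at x)"
    and smooth: "\<And>x y. norm (gradf x - gradf y) \<le> \<beta> * norm (x - y)"
  shows "f y \<le> f x + gradf x \<bullet> (y - x) + \<beta>/2 * (norm (y - x))\<^sup>2"
proof -
  define h where "h = y - x"
  define \<phi> where "\<phi> = (\<lambda>\<tau>::real. f (x + \<tau> *\<^sub>R h) - \<tau> * (gradf x \<bullet> h) - \<beta>/2 * \<tau>\<^sup>2 * (norm h)\<^sup>2)"
  have "\<phi> 1 \<le> \<phi> 0"
  proof (rule DERIV_nonpos_imp_nonincreasing[of 0 1])
    fix \<tau> :: real assume t0: "0 \<le> \<tau>" and "\<tau> \<le> 1"
    have d1: "((\<lambda>\<tau>. x + \<tau> *\<^sub>R h) has_derivative (\<lambda>d. d *\<^sub>R h)) (at \<tau>)"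
      by (auto intro!: derivative_eq_intros)
    have "((\<lambda>\<tau>. f (x + \<tau> *\<^sub>R h)) has_derivative (\<lambda>d. gradf (x + \<tau> *\<^sub>R h) \<bullet> (d *\<^sub>R h))) (at \<tau>)"
      using has_derivative_compose[OF d1 grad] by simp
    moreover have "(\<lambda>d. gradf (x + \<tau> *\<^sub>R h) \<bullet> (d *\<^sub>R h)) = (*) (gradf (x + \<tau> *\<^sub>R h) \<bullet> h)"
      by (auto simp: mult.commute)
    ultimately have "((\<lambda>\<tau>. f (x + \<tau> *\<^sub>R h)) has_real_derivative (gradf (x + \<tau> *\<^sub>R h) \<bullet> h)) (at \<tau>)"
      unfolding has_field_derivative_def by simp
    hence D: "(\<phi> has_real_derivative (gradf (x + \<tau> *\<^sub>R h) \<bullet> h - gradf x \<bullet> h - \<beta>/2 * (2*\<tau>) * (norm h)\<^sup>2)) (at \<tau>)"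
      unfolding \<phi>_def by (auto intro!: derivative_eq_intros)
    have "gradf (x + \<tau> *\<^sub>R h) \<bullet> h - gradf x \<bullet> h = (gradf (x + \<tau> *\<^sub>R h) - gradf x) \<bullet> h"
      by (simp add: inner_diff_left)
    also have "\<dots> \<le> norm (gradf (x + \<tau> *\<^sub>R h) - gradf x) * norm h" by (rule norm_cauchy_schwarz)
    also have "\<dots> \<le> \<beta> * norm (\<tau> *\<^sub>R h) * norm h"
      using smooth[of "x + \<tau> *\<^sub>R h" x] by (intro mult_right_mono) auto
    also have "\<dots> = \<beta> * \<tau> * (norm h)\<^sup>2" using t0 by (simp add: power2_eq_square)
    finally show "\<exists>y. (\<phi> has_real_derivative y) (at \<tau>) \<and> y \<le> 0" using D by (intro exI[of _ "gradf (x + \<tau> *\<^sub>R h) \<bullet> h - gradf x \<bullet> h - \<beta>/2 * (2*\<tau>) * (norm h)\<^sup>2"]) auto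
  qed simp
  thus ?thesis unfolding \<phi>_def h_def by simp
qed

lemma beta_nonneg:
  fixes gradf :: "'a::euclidean_space \<Rightarrow> 'a"
  assumes smooth: "\<And>x y. norm (gradf x - gradf y) \<le> \<beta> * norm (x - y)"
  shows "\<beta> \<ge> 0"
proof -
  obtain b :: 'a where b: "b \<in> Basis" using nonempty_Basis by blast
  hence "norm b > 0" by (simp add: nonzero_Basis)
  moreover have "0 \<le> \<beta> * norm (b - 0)" using smooth[of b 0] norm_ge_zero order_trans by blast
  ultimately show ?thesis by (simp add: zero_le_mult_iff)
qed

lemma grad_bound:
  fixes f :: "'a::euclidean_space \<Rightarrow> real" and gradf :: "'a \<Rightarrow> 'a"
  assumes grad: "\<And>x. (f has_derivative (\<lambda>h. gradf x \<bullet> h)) (at x)"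
    and smooth: "\<And>x y. norm (gradf x - gradf y) \<le> \<beta> * norm (x - y)"
    and fmin: "\<And>x. fstar \<le> f x"
  shows "(norm (gradf x))\<^sup>2 \<le> 2 * \<beta> * (f x - fstar)"
proof -
  have b0: "\<beta> \<ge> 0" by (rule beta_nonneg[OF smooth])
  have gen: "fstar \<le> f x - c * (norm (gradf x))\<^sup>2 + \<beta>/2 * c\<^sup>2 * (norm (gradf x))\<^sup>2" for c :: real
  proof -
    have "fstar \<le> f (x - c *\<^sub>R gradf x)" by (rule fmin)
    also have "\<dots> \<le> f x + gradf x \<bullet> ((x - c *\<^sub>R gradf x) - x) + \<beta>/2 * (norm ((x - c *\<^sub>R gradf x) - x))\<^sup>2"
      by (rule descent[OF grad smooth])
    also have "\<dots> = f x - c * (norm (gradf x))\<^sup>2 + \<beta>/2 * c\<^sup>2 * (norm (gradf x))\<^sup>2"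
      by (simp add: power2_norm_eq_inner power_mult_distrib)
    finally show ?thesis .
  qed
  show ?thesis
  proof (cases "\<beta> = 0")
    case True
    show ?thesis
    proof (rule ccontr)
      assume "\<not> ?thesis"
      hence pos: "(norm (gradf x))\<^sup>2 > 0" using True by simp
      have "fstar \<le> f x - ((f x - fstar + 1)/(norm (gradf x))\<^sup>2) * (norm (gradf x))\<^sup>2"
        using gen[of "(f x - fstar + 1)/(norm (gradf x))\<^sup>2"] True by simp
      thus False using pos by simp
    qed
  next
    case False
    hence bp: "\<beta> > 0" using b0 by simp
    have "fstar \<le> f x - (1/\<beta>) * (norm (gradf x))\<^sup>2 + \<beta>/2 * (1/\<beta>)\<^sup>2 * (norm (gradf x))\<^sup>2"
      by (rule gen)
    also have "\<dots> = f x - (norm (gradf x))\<^sup>2 / (2*\<beta>)" using bp by (simp add: field_simps power2_eq_square)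
    finally show ?thesis using bp by (simp add: field_simps)
  qed
qed

theorem lemma7:
  fixes f :: "'a::euclidean_space \<Rightarrow> real" and gradf :: "'a \<Rightarrow> 'a"
    and \<beta> fstar \<eta> \<gamma> \<sigma>\<^sub>0 \<sigma>\<^sub>1 :: real
    and w g :: "nat \<Rightarrow> 'a" and t :: nat
  assumes grad: "\<And>x. (f has_derivative (\<lambda>h. gradf x \<bullet> h)) (at x)"
    and smooth: "\<And>x y. norm (gradf x - gradf y) \<le> \<beta> * norm (x - y)"
    and fmin: "\<And>x. fstar \<le> f x" and fmin_att: "\<exists>x. f x = fstar"
    and eta_pos: "\<eta> > 0" and gamma_pos: "\<gamma> > 0"
    and sigma0: "\<sigma>\<^sub>0 \<ge> 0" and sigma1: "\<sigma>\<^sub>1 \<ge> 0"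
    and noise: "\<And>s. s \<ge> 1 \<Longrightarrow>
        (norm (g s - gradf (w s)))\<^sup>2 \<le> \<sigma>\<^sub>0\<^sup>2 + \<sigma>\<^sub>1\<^sup>2 * (norm (gradf (w s)))\<^sup>2"
    and update: "\<And>s. s \<ge> 1 \<Longrightarrow> w (s + 1) = w s - ada_eta \<eta> \<gamma> g s *\<^sub>R g s"
    and t: "t \<ge> 1"
  shows "(\<Sum>s=1..t. \<bar>eta_tilde \<eta> \<gamma> \<sigma>\<^sub>0 \<sigma>\<^sub>1 gradf w g s - ada_eta \<eta> \<gamma> g s\<bar>
            * (gradf (w s) \<bullet> g s))
    \<le> Delta_bar f fstar w t / 4
       + 1/2 * (\<Sum>s=1..t. eta_tilde \<eta> \<gamma> \<sigma>\<^sub>0 \<sigma>\<^sub>1 gradf w g s * (norm (gradf (w s)))\<^sup>2)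
       + 2 * \<eta> * \<sigma>\<^sub>0 * (\<Sum>s=1..t. (norm (g s))\<^sup>2 / (adaG \<gamma> g s)\<^sup>2)
       + 8 * \<eta>\<^sup>2 * \<beta> * \<sigma>\<^sub>1\<^sup>2 * (\<Sum>s=1..t. (norm (g s))\<^sup>2 / (adaG \<gamma> g s)\<^sup>2)\<^sup>2"
proof -
  define N where "N s = norm (gradf (w s))" for s
  define n where "n s = norm (g s)" for s
  define q where "q s = (norm (g s))\<^sup>2 / (adaG \<gamma> g s)\<^sup>2" for s
  define et where "et s = eta_tilde \<eta> \<gamma> \<sigma>\<^sub>0 \<sigma>\<^sub>1 gradf w g s" for s
  define D where "D = Delta_bar f fstar w t"
  define S where "S = (\<Sum>s=1..t. q s)"
  have b0: "\<beta> \<ge> 0" by (rule beta_nonneg[OF smooth])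
  have fD: "f (w s) - fstar \<le> D" if "s \<in> {1..t}" for s
    unfolding D_def Delta_bar_def using that by (intro diff_right_mono Max_ge) auto
  have D0: "D \<ge> 0" using fD[of 1] fmin[of "w 1"] t by auto
  have S0: "S \<ge> 0" unfolding S_def q_def by (intro sum_nonneg) auto
  have ND: "N s \<le> sqrt (2*\<beta>) * sqrt D" if "s \<in> {1..t}" for s
  proof -
    have "2*\<beta>*(f (w s) - fstar) \<le> 2*\<beta>*D" using fD[OF that] b0 by (intro mult_left_mono) auto
    hence "(N s)\<^sup>2 \<le> 2*\<beta>*D" unfolding N_def
      using grad_bound[OF grad smooth fmin, of "w s"] by linarith
    hence "N s \<le> sqrt (2*\<beta>*D)" using N_def by (simp add: real_le_rsqrt)
    thus ?thesis by (simp add: real_sqrt_mult)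
  qed
  have termb: "\<bar>et s - ada_eta \<eta> \<gamma> g s\<bar> * (gradf (w s) \<bullet> g s)
      \<le> 1/2 * et s * (N s)\<^sup>2 + \<eta> * \<sigma>\<^sub>0 * q s + \<eta> * \<sigma>\<^sub>1 * (sqrt (2*\<beta>) * sqrt D) * q s"
    if s: "s \<in> {1..t}" for s
  proof -
    define P where "P = (adaG \<gamma> g (s-1))\<^sup>2"
    define \<sigma> where "\<sigma> = sqrt (\<sigma>\<^sub>0\<^sup>2 + \<sigma>\<^sub>1\<^sup>2 * (N s)\<^sup>2)"
    have sum_nn: "(\<Sum>i=1..k. (norm (g i))\<^sup>2) \<ge> 0" for k by (intro sum_nonneg) auto
    have P_eq: "P = \<gamma>\<^sup>2 + (\<Sum>i=1..s-1. (norm (g i))\<^sup>2)"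
      unfolding P_def adaG_def using sum_nn[of "s-1"] by (simp add: add_nonneg_nonneg)
    have P0: "P > 0" using P_eq sum_nn[of "s-1"] gamma_pos by (simp add: add_pos_nonneg)
    have split: "(\<Sum>i=1..s. (norm (g i))\<^sup>2) = (\<Sum>i=1..s-1. (norm (g i))\<^sup>2) + (norm (g s))\<^sup>2"
    proof -
      have e: "{1..s} = insert s {1..s-1}" using s by auto
      have ns: "s \<notin> {1..s-1}" using s by auto
      show ?thesis unfolding e using sum.insert[OF _ ns, of "\<lambda>i. (norm (g i))\<^sup>2"] by (simp add: add.commute)
    qed
    have Gs: "adaG \<gamma> g s = sqrt (P + (n s)\<^sup>2)" unfolding adaG_def P_eq n_def split by simp
    have Gs2: "(adaG \<gamma> g s)\<^sup>2 = P + (n s)\<^sup>2" unfolding Gs using P0 by simp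
    have sg0: "\<sigma> \<ge> 0" unfolding \<sigma>_def by simp
    have sg2: "\<sigma>\<^sup>2 = \<sigma>\<^sub>0\<^sup>2 + \<sigma>\<^sub>1\<^sup>2 * (N s)\<^sup>2" unfolding \<sigma>_def by (simp add: add_nonneg_nonneg)
    have et_eq: "et s = \<eta> / sqrt (P + (N s)\<^sup>2 + \<sigma>\<^sup>2)"
    proof -
      have "P + (1 + \<sigma>\<^sub>1\<^sup>2) * (N s)\<^sup>2 + \<sigma>\<^sub>0\<^sup>2 = P + (N s)\<^sup>2 + (\<sigma>\<^sub>0\<^sup>2 + \<sigma>\<^sub>1\<^sup>2 * (N s)\<^sup>2)"
        by (simp add: distrib_right)
      thus ?thesis unfolding et_def eta_tilde_def sg2 by (simp add: P_def N_def)
    qed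
    have eta_eq: "ada_eta \<eta> \<gamma> g s = \<eta> / sqrt (P + (n s)\<^sup>2)" unfolding ada_eta_def Gs ..
    have nN: "(n s - N s)\<^sup>2 \<le> \<sigma>\<^sup>2"
    proof -
      have "\<bar>n s - N s\<bar> \<le> norm (g s - gradf (w s))" unfolding n_def N_def by (rule norm_triangle_ineq3)
      hence "(n s - N s)\<^sup>2 \<le> (norm (g s - gradf (w s)))\<^sup>2"
        by (metis abs_ge_zero power2_abs power_mono)
      also have "\<dots> \<le> \<sigma>\<^sup>2" unfolding sg2 N_def using noise s by auto
      finally show ?thesis .
    qed
    have ip: "gradf (w s) \<bullet> g s \<le> N s * n s" unfolding N_def n_def
      by (metis norm_cauchy_schwarz)
    have k: "\<bar>et s - ada_eta \<eta> \<gamma> g s\<bar> * (gradf (w s) \<bullet> g s)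
       \<le> 1/2 * et s * (N s)\<^sup>2 + \<eta> * \<sigma> * (n s)\<^sup>2 / (P + (n s)\<^sup>2)"
      unfolding et_eq eta_eq
      by (rule key[OF P0 _ _ eta_pos sg0 nN ip]) (auto simp: n_def N_def)
    have sle: "\<sigma> \<le> \<sigma>\<^sub>0 + \<sigma>\<^sub>1 * N s"
    proof -
      have "\<sigma>\<^sup>2 \<le> (\<sigma>\<^sub>0 + \<sigma>\<^sub>1 * N s)\<^sup>2" unfolding sg2 using sigma0 sigma1
        by (simp add: power2_eq_square algebra_simps N_def)
      moreover have "0 \<le> \<sigma>\<^sub>0 + \<sigma>\<^sub>1 * N s" using sigma0 sigma1 by (simp add: N_def)
      ultimately show ?thesis using power2_le_imp_le by blast
    qed
    have qeq: "(n s)\<^sup>2 / (P + (n s)\<^sup>2) = q s" unfolding q_def Gs2 n_def ..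
    have q0: "q s \<ge> 0" unfolding q_def by simp
    have "\<eta> * \<sigma> * (n s)\<^sup>2 / (P + (n s)\<^sup>2) = \<eta> * \<sigma> * q s" unfolding qeq[symmetric] by simp
    also have "\<dots> \<le> \<eta> * (\<sigma>\<^sub>0 + \<sigma>\<^sub>1 * N s) * q s"
      using sle eta_pos q0 by (intro mult_right_mono mult_left_mono) auto
    also have "\<dots> \<le> \<eta> * (\<sigma>\<^sub>0 + \<sigma>\<^sub>1 * (sqrt (2*\<beta>) * sqrt D)) * q s"
      using ND[OF s] eta_pos q0 sigma1 by (intro mult_right_mono mult_left_mono add_left_mono) auto
    finally have "\<eta> * \<sigma> * (n s)\<^sup>2 / (P + (n s)\<^sup>2) \<le> \<eta> * (\<sigma>\<^sub>0 + \<sigma>\<^sub>1 * (sqrt (2*\<beta>) * sqrt D)) * q s" .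
    moreover have "\<eta> * (\<sigma>\<^sub>0 + \<sigma>\<^sub>1 * (sqrt (2*\<beta>) * sqrt D)) * q s = \<eta> * \<sigma>\<^sub>0 * q s + \<eta> * \<sigma>\<^sub>1 * (sqrt (2*\<beta>) * sqrt D) * q s"
      by (simp add: distrib_left distrib_right)
    ultimately show ?thesis using k by linarith
  qed
  have "(\<Sum>s=1..t. \<bar>et s - ada_eta \<eta> \<gamma> g s\<bar> * (gradf (w s) \<bullet> g s))
     \<le> (\<Sum>s=1..t. 1/2 * et s * (N s)\<^sup>2 + \<eta> * \<sigma>\<^sub>0 * q s + \<eta> * \<sigma>\<^sub>1 * (sqrt (2*\<beta>) * sqrt D) * q s)"
    by (rule sum_mono[OF termb])
  also have "\<dots> = 1/2 * (\<Sum>s=1..t. et s * (N s)\<^sup>2) + \<eta> * \<sigma>\<^sub>0 * S + sqrt D * (\<eta> * \<sigma>\<^sub>1 * sqrt (2*\<beta>) * S)"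
  proof -
    have e1: "(\<Sum>s=1..t. 1/2 * et s * (N s)\<^sup>2) = 1/2 * (\<Sum>s=1..t. et s * (N s)\<^sup>2)"
      by (simp add: sum_distrib_left mult.assoc)
    have e2: "(\<Sum>s=1..t. \<eta> * \<sigma>\<^sub>0 * q s) = \<eta> * \<sigma>\<^sub>0 * S"
      unfolding S_def by (simp add: sum_distrib_left)
    have e3: "(\<Sum>s=1..t. \<eta> * \<sigma>\<^sub>1 * (sqrt (2*\<beta>) * sqrt D) * q s) = sqrt D * (\<eta> * \<sigma>\<^sub>1 * sqrt (2*\<beta>) * S)"
    proof -
      have "(\<Sum>s=1..t. \<eta> * \<sigma>\<^sub>1 * (sqrt (2*\<beta>) * sqrt D) * q s) = (\<eta> * \<sigma>\<^sub>1 * (sqrt (2*\<beta>) * sqrt D)) * S"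
        unfolding S_def by (simp add: sum_distrib_left)
      thus ?thesis by (simp add: ac_simps)
    qed
    show ?thesis unfolding sum.distrib e1 e2 e3 ..
  qed
  also have "\<dots> \<le> 1/2 * (\<Sum>s=1..t. et s * (N s)\<^sup>2) + 2 * \<eta> * \<sigma>\<^sub>0 * S + (D/4 + 8 * \<eta>\<^sup>2 * \<beta> * \<sigma>\<^sub>1\<^sup>2 * S\<^sup>2)"
  proof -
    have a: "\<eta> * \<sigma>\<^sub>0 * S \<le> 2 * \<eta> * \<sigma>\<^sub>0 * S" using eta_pos sigma0 S0 by simp
    define v where "v = \<eta> * \<sigma>\<^sub>1 * sqrt (2*\<beta>) * S"
    have "sqrt D * v \<le> (sqrt D)\<^sup>2 / 4 + v\<^sup>2"
      using sum_squares_ge_zero[of "sqrt D / 2 - v" 0] by (simp add: power2_eq_square algebra_simps)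
    also have "\<dots> = D/4 + 2 * \<eta>\<^sup>2 * \<beta> * \<sigma>\<^sub>1\<^sup>2 * S\<^sup>2"
      unfolding v_def using D0 b0 by (simp add: power_mult_distrib)
    also have "\<dots> \<le> D/4 + 8 * \<eta>\<^sup>2 * \<beta> * \<sigma>\<^sub>1\<^sup>2 * S\<^sup>2" using b0 by simp
    finally show ?thesis using a unfolding v_def by simp
  qed
  finally have X: "(\<Sum>s=1..t. \<bar>et s - ada_eta \<eta> \<gamma> g s\<bar> * (gradf (w s) \<bullet> g s)) \<le> 1/2 * (\<Sum>s=1..t. et s * (N s)\<^sup>2) + 2 * \<eta> * \<sigma>\<^sub>0 * S + (D/4 + 8 * \<eta>\<^sup>2 * \<beta> * \<sigma>\<^sub>1\<^sup>2 * S\<^sup>2)" .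
  show ?thesis using X unfolding et_def N_def S_def q_def D_def by linarith
qed

end
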